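(* Let $\varphi:S^1\to S^1$ be an orientation preserving circle homeomorphism with irrational rotation number $\varrho\in\mathbb{R}\setminus\mathbb{Q}$, let $\Phi:\mathbb{R}\to\mathbb{R}$ be a lift of $\varphi$, let $x_0\in\mathbb{R}$, and let $\Gamma$ be the curlicue generated by the sequence $u_n=\Phi^n(x_0)$, $n\ge 0$. Then: (1) If $\varphi=\mathcal{R}_{\varrho}$ is the rotation by $\varrho$ (i.e. $\Phi(x)=x+\varrho$ up to an integer translation), then $\Gamma$ is bounded and superficial. (2) If $\Gamma$ is bounded, then $\Gamma$ is superficial.
   Context: Identify $S^1=\mathbb{R}/\mathbb{Z}$ via $x\mapsto \exp(2\pi\imath x)$; a lift of $\varphi$ is a homeomorphism $\Phi:\mathbb{R}\to\mathbb{R}$ with $\Phi(x+1)=\Phi(x)+1$ projecting to $\varphi$. For a real sequence $u=(u_n)_{n\ge0}$, the curlicue $\Gamma(u)$ is the piecewise linear curve in $\mathbb{C}$ passing consecutively through $z_0=0$ and $z_n=\sum_{k=0}^{n-1}\exp(2\pi\imath u_k)$, $n\ge1$. The curve is bounded if its diameter is finite. For $t>0$, $\Gamma_t$ denotes the initial part of $\Gamma$ of length $t$, and $\Gamma^{\varepsilon}=\{y\in\mathbb{C}:\exists x\in\Gamma,\ |x-y|<\varepsilon\}$. An unbounded curve $\Gamma$ is superficial if $\lim_{t\to\infty} t/\mathrm{Diam}\,\Gamma_t=\infty$; a bounded curve $\Gamma$ is superficial if $\lim_{\varepsilon\to0}\mathrm{Area}(\Gamma^{\varepsilon})/\varepsilon=\infty$,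 where Area is 2-dimensional Lebesgue measure. *)

theory Defs
  imports "HOL-Analysis.Analysis"
begin

text \<open>The circle S^1 is the unit circle in the complex plane; R/Z is identified
  with it via x maps to exp(2 pi i x) = cis (2 pi x).\<close>

definition circle_map :: "real \<Rightarrow> complex" where
  "circle_map x = cis (2 * pi * x)"

definition is_lift :: "(real \<Rightarrow> real) \<Rightarrow> (complex \<Rightarrow> complex) \<Rightarrow> bool" where
  "is_lift Phi phi \<longleftrightarrow>
     (\<exists>g. homeomorphism UNIV UNIV Phi g) \<and>
     (\<forall>x. Phi (x + 1) = Phi x + 1) \<and>
     (\<forall>x. phi (circle_map x) = circle_map (Phi x))"

definition orient_pres_circle_homeo :: "(complex \<Rightarrow> complex) \<Rightarrow> bool" where
  "orient_pres_circle_homeo phi \<longleftrightarrow>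
     (\<exists>psi. homeomorphism (sphere 0 1) (sphere 0 1) phi psi) \<and>
     (\<exists>Phi. is_lift Phi phi \<and> mono Phi)"

definition rotation_number :: "(real \<Rightarrow> real) \<Rightarrow> real" where
  "rotation_number Phi = lim (\<lambda>n. ((Phi ^^ n) 0) / real n)"

text \<open>Curlicue: vertices z_n and arc-length parametrisation (every edge has length 1).\<close>
definition curl_vertex :: "(nat \<Rightarrow> real) \<Rightarrow> nat \<Rightarrow> complex" where
  "curl_vertex u n = (\<Sum>k<n. circle_map (u k))"

definition curl_param :: "(nat \<Rightarrow> real) \<Rightarrow> real \<Rightarrow> complex" where
  "curl_param u s = curl_vertex u (nat \<lfloor>s\<rfloor>)
      + of_real (s - of_int \<lfloor>s\<rfloor>) * circle_map (u (nat \<lfloor>s\<rfloor>))"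

definition curlicue :: "(nat \<Rightarrow> real) \<Rightarrow> complex set" where
  "curlicue u = curl_param u ` {0..}"

definition curlicue_init :: "(nat \<Rightarrow> real) \<Rightarrow> real \<Rightarrow> complex set" where
  "curlicue_init u t = curl_param u ` {0..t}"

definition eps_nbhd :: "complex set \<Rightarrow> real \<Rightarrow> complex set" where
  "eps_nbhd G e = {y. \<exists>x\<in>G. dist x y < e}"

definition curlicue_bounded :: "(nat \<Rightarrow> real) \<Rightarrow> bool" where
  "curlicue_bounded u \<longleftrightarrow> bounded (curlicue u)"

definition superficial :: "(nat \<Rightarrow> real) \<Rightarrow> bool" where
  "superficial u \<longleftrightarrow>
     (if curlicue_bounded u
      then filterlim (\<lambda>e. measure lebesgue (eps_nbhd (curlicue u) e) / e) at_top (at_right 0)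
      else filterlim (\<lambda>t. t / diameter (curlicue_init u t)) at_top at_top)"

end

theory Submission
  imports Defs
begin


lemma ball_meas: fixes c :: complex assumes "r \<ge> 0"
  shows "measure lebesgue (ball c r) = pi * r^2"
proof -
  have "measure lborel (ball c r) = unit_ball_vol (DIM(complex)) * r ^ DIM(complex)"
    using content_ball[OF assms, of c] by simp
  then show ?thesis using unit_ball_vol_2 by (simp add: measure_completion)
qed

lemma ball_fin: "emeasure lebesgue (ball (c::complex) r) \<noteq> \<infinity>"
  using lmeasurable_ball[of c r] by (simp add: fmeasurable_def)

lemma count_interval:
  fixes S :: "nat set"
  assumes "finite S" "\<And>m. m \<in> S \<Longrightarrow> \<bar>real m - c\<bar> < r" "r > 0"
  shows "real (card S) \<le> 2 * r + 1"
proof (cases "S = {}")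
  case True then show ?thesis using assms by simp
next
  case False
  have sub: "S \<subseteq> {Min S..Max S}" using assms(1) by auto
  have "card S \<le> card {Min S..Max S}" using card_mono[OF _ sub] by simp
  also have "\<dots> = Suc (Max S) - Min S" by simp
  finally have c: "real (card S) \<le> real (Max S) + 1 - real (Min S)"
    using Min_le[OF assms(1), of "Max S"] Max_in[OF assms(1) False] by linarith
  have "\<bar>real (Max S) - c\<bar> < r" "\<bar>real (Min S) - c\<bar> < r"
    using assms(2) Max_in[OF assms(1) False] Min_in[OF assms(1) False] by auto
  then show ?thesis using c by linarith
qed

lemma card_diff_real:
  assumes "finite A" "finite B"
  shows "real (card A) - real (card B) \<le> real (card (A - B))"
proof -
  have "A \<subseteq> (A - B) \<union> B" by auto
  hence "card A \<le> card ((A - B) \<union> B)" by (intro card_mono) (use assms in auto)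
  also have "\<dots> \<le> card (A - B) + card B" by (rule card_Un_le)
  finally show ?thesis by linarith
qed

lemma eps_nbhd_lmeas:
  assumes "bounded G"
  shows "eps_nbhd G e \<in> lmeasurable"
proof -
  have eq: "eps_nbhd G e = (\<Union>x\<in>G. ball x e)" unfolding eps_nbhd_def by (auto simp: ball_def)
  have "open (eps_nbhd G e)" unfolding eq by auto
  moreover obtain R where R: "\<And>x. x \<in> G \<Longrightarrow> norm x \<le> R" using assms bounded_iff by blast
  have "bounded (eps_nbhd G e)" unfolding bounded_iff eps_nbhd_def
  proof (intro exI[of _ "R + e"] ballI)
    fix y assume "y \<in> {y. \<exists>x\<in>G. dist x y < e}"
    then obtain x where "x \<in> G" "dist x y < e" by auto
    then show "norm y \<le> R + e" using R[of x] norm_triangle_ineq2[of y x]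
      by (simp add: dist_norm norm_minus_commute)
  qed
  ultimately show ?thesis using lmeasurable_open by blast
qed

lemma geom_sep:
  fixes a b d f :: complex and s t :: real
  assumes "norm f = 1" "Im (d * cnj f) \<noteq> 0"
  shows "norm ((a + of_real s * d) - (b + of_real t * f))
          \<ge> \<bar>Im (d * cnj f)\<bar> * \<bar>s - (- Im ((a - b) * cnj f) / Im (d * cnj f))\<bar>"
proof -
  define c where "c = Im (d * cnj f)"
  define w where "w = ((a + of_real s * d) - (b + of_real t * f)) * cnj f"
  have ff: "f * cnj f = 1" using assms(1) complex_norm_square[of f] by simp
  have nw: "norm w = norm ((a + of_real s * d) - (b + of_real t * f))"
    unfolding w_def norm_mult using assms(1) by simp
  have "Im w = Im ((a - b) * cnj f) + s * c - t * Im (f * cnj f)"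
    unfolding w_def c_def by (simp add: algebra_simps)
  also have "\<dots> = Im ((a - b) * cnj f) + s * c" using ff by simp
  also have "\<dots> = c * (s - (- Im ((a - b) * cnj f) / c))"
    using assms(2) unfolding c_def by (simp add: field_simps)
  finally have "\<bar>Im w\<bar> = \<bar>c\<bar> * \<bar>s - (- Im ((a - b) * cnj f) / c)\<bar>" by (simp add: abs_mult)
  then show ?thesis using abs_Im_le_cmod[of w] nw unfolding c_def by linarith
qed

lemma area_bound:
  fixes G :: "complex set" and F :: "nat set" and a d :: "nat \<Rightarrow> complex"
  assumes bG: "bounded G" and fF: "finite F"
    and seg: "\<And>i s. i \<in> F \<Longrightarrow> 0 \<le> s \<Longrightarrow> s \<le> 1 \<Longrightarrow> a i + of_real s * d i \<in> G"
    and nd: "\<And>i. i \<in> F \<Longrightarrow> norm (d i) = 1"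
    and np: "\<And>i j. i \<in> F \<Longrightarrow> j \<in> F \<Longrightarrow> i \<noteq> j \<Longrightarrow> Im (d i * cnj (d j)) \<noteq> 0"
  shows "\<exists>C. \<forall>e. 0 < e \<longrightarrow> e \<le> 1/2 \<longrightarrow>
           measure lebesgue (eps_nbhd G e) \<ge> pi * e * real (card F) / 2 - C * e^2"
proof -
  define \<sigma> where "\<sigma> i j = \<bar>Im (d i * cnj (d j))\<bar>" for i j
  define s0 where "s0 i j = - Im ((a i - a j) * cnj (d j)) / Im (d i * cnj (d j))" for i j
  define K where "K = (\<Sum>i\<in>F. \<Sum>j\<in>F - {i}. 2 / \<sigma> i j + 1)"
  have sig_pos: "\<sigma> i j > 0" if "i \<in> F" "j \<in> F" "i \<noteq> j" for i j
    using np[OF that] unfolding \<sigma>_def by simp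
  have gs: "norm ((a i + of_real s * d i) - (a j + of_real t * d j)) \<ge> \<sigma> i j * \<bar>s - s0 i j\<bar>"
    if "i \<in> F" "j \<in> F" "i \<noteq> j" for i j s t
    unfolding \<sigma>_def s0_def using geom_sep[OF nd[OF that(2)] np[OF that]] by blast
  show ?thesis
  proof (intro exI[of _ "pi * K"] allI impI)
    fix e :: real assume e0: "0 < e" and e1: "e \<le> 1/2"
    define h where "h = 2 * e"
    define M where "M = nat \<lfloor>1 / h\<rfloor>"
    have h0: "h > 0" using e0 unfolding h_def by simp
    have M1: "real M + 1 \<ge> 1 / h"
      unfolding M_def using h0 by linarith
    have hM: "h * real m \<le> 1" if "m \<le> M" for m
    proof -
      have "real m \<le> real M" using that by simp
      also have "\<dots> \<le> 1 / h" unfolding M_def using h0 e1 by (simp add: h_def)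
      finally show ?thesis using h0 by (simp add: field_simps)
    qed
    define p where "p i m = a i + of_real (h * real m) * d i" for i m
    define B where "B i j = {m \<in> {..M}. \<bar>h * real m - s0 i j\<bar> < 2 * e / \<sigma> i j}" for i j
    define Gi where "Gi i = {..M} - (\<Union>j\<in>F - {i}. B i j)" for i
    define I where "I = Sigma F Gi"
    have fI: "finite I" unfolding I_def Gi_def using fF by auto
    have cardB: "real (card (B i j)) \<le> 2 / \<sigma> i j + 1" if "i \<in> F" "j \<in> F" "i \<noteq> j" for i j
    proof -
      have "real (card (B i j)) \<le> 2 * (1 / \<sigma> i j) + 1"
      proof (rule count_interval[where c = "s0 i j / h"])
        show "finite (B i j)" unfolding B_def by auto
        show "0 < 1 / \<sigma> i j" using sig_pos[OF that] by simp
        fix m assume "m \<in> B i j"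
        hence "\<bar>h * real m - s0 i j\<bar> < 2 * e / \<sigma> i j" unfolding B_def by auto
        moreover have "\<bar>h * real m - s0 i j\<bar> = h * \<bar>real m - s0 i j / h\<bar>"
          using h0 by (simp add: field_simps abs_mult[symmetric])
        ultimately show "\<bar>real m - s0 i j / h\<bar> < 1 / \<sigma> i j"
          using h0 sig_pos[OF that] unfolding h_def by (simp add: field_simps)
      qed
      then show ?thesis by simp
    qed
    have cardGi: "real (card (Gi i)) \<ge> real M + 1 - (\<Sum>j\<in>F - {i}. 2 / \<sigma> i j + 1)" if "i \<in> F" for i
    proof -
      have "card (\<Union>j\<in>F - {i}. B i j) \<le> (\<Sum>j\<in>F - {i}. card (B i j))"
        using card_UN_le[of "F - {i}" "B i"] fF by blast
      hence "real (card (\<Union>j\<in>F - {i}. B i j)) \<le> (\<Sum>j\<in>F - {i}. real (card (B i j)))"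
        unfolding of_nat_sum[symmetric] of_nat_le_iff .
      also have "\<dots> \<le> (\<Sum>j\<in>F - {i}. 2 / \<sigma> i j + 1)"
        by (intro sum_mono cardB) (use that in auto)
      finally have "real (card (\<Union>j\<in>F - {i}. B i j)) \<le> (\<Sum>j\<in>F - {i}. 2 / \<sigma> i j + 1)" .
      moreover have "real (card {..M}) - real (card (\<Union>j\<in>F - {i}. B i j)) \<le> real (card (Gi i))"
        unfolding Gi_def by (rule card_diff_real) (use fF in \<open>auto simp: B_def\<close>)
      ultimately show ?thesis by simp
    qed
    have cardI: "real (card I) \<ge> real (card F) / h - K"
    proof -
      have "real (card I) = (\<Sum>i\<in>F. real (card (Gi i)))"
        unfolding I_def using fF by (subst card_SigmaI) (auto simp: Gi_def)
      also have "\<dots> \<ge> (\<Sum>i\<in>F. 1 / h - (\<Sum>j\<in>F - {i}. 2 / \<sigma> i j + 1))"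
      proof (rule sum_mono)
        fix i assume "i \<in> F"
        show "1 / h - (\<Sum>j\<in>F - {i}. 2 / \<sigma> i j + 1) \<le> real (card (Gi i))"
          using cardGi[OF \<open>i \<in> F\<close>] M1 by linarith
      qed
      finally show ?thesis unfolding K_def by (simp add: sum_subtractf)
    qed
    have sep: "dist (p i m) (p i' m') \<ge> 2 * e" if "(i, m) \<in> I" "(i', m') \<in> I" "(i, m) \<noteq> (i', m')" for i m i' m'
    proof (cases "i = i'")
      case True
      hence "m \<noteq> m'" using that by auto
      hence "1 \<le> \<bar>real m - real m'\<bar>" by linarith
      have "dist (p i m) (p i' m') = norm (of_real (h * (real m - real m')) * d i)"
        unfolding p_def dist_norm True by (simp add: algebra_simps)
      also have "\<dots> = \<bar>h * (real m - real m')\<bar> * norm (d i)" by (simp only: norm_mult norm_of_real)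
      also have "\<dots> = h * \<bar>real m - real m'\<bar>"
        using nd[of i] that h0 unfolding I_def by (simp add: abs_mult)
      finally show ?thesis using \<open>1 \<le> \<bar>real m - real m'\<bar>\<close> h0 unfolding h_def
        by (simp add: mult_le_cancel_left1 mult_left_mono)
    next
      case False
      have iF: "i \<in> F" "i' \<in> F" and mG: "m \<in> Gi i" using that unfolding I_def by auto
      hence "m \<notin> B i i'" "m \<le> M" using False unfolding Gi_def by auto
      hence "\<bar>h * real m - s0 i i'\<bar> \<ge> 2 * e / \<sigma> i i'" unfolding B_def by auto
      hence "\<sigma> i i' * \<bar>h * real m - s0 i i'\<bar> \<ge> 2 * e"
        using sig_pos[OF iF False] by (simp add: field_simps)
      also have "\<sigma> i i' * \<bar>h * real m - s0 i i'\<bar> \<le> dist (p i m) (p i' m')"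
        unfolding p_def dist_norm using gs[OF iF False] by blast
      finally show ?thesis .
    qed
    have disj: "disjoint_family_on (\<lambda>k. ball (case k of (i, m) \<Rightarrow> p i m) e) I"
      unfolding disjoint_family_on_def
    proof (intro ballI impI)
      fix k k' assume k: "k \<in> I" "k' \<in> I" "k \<noteq> k'"
      obtain i m i' m' where kk: "k = (i, m)" "k' = (i', m')" by (cases k, cases k')
      have sp: "dist (p i m) (p i' m') \<ge> 2 * e" using sep k kk by blast
      show "ball (case k of (i, m) \<Rightarrow> p i m) e \<inter> ball (case k' of (i, m) \<Rightarrow> p i m) e = {}"
      proof (rule ccontr)
        assume "ball (case k of (i, m) \<Rightarrow> p i m) e \<inter> ball (case k' of (i, m) \<Rightarrow> p i m) e \<noteq> {}"
        then obtain z where z1: "z \<in> ball (p i m) e" and z2: "z \<in> ball (p i' m') e" using kk by auto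
        have "dist (p i m) (p i' m') \<le> dist (p i m) z + dist z (p i' m')" by (rule dist_triangle)
        also have "\<dots> < 2 * e" using z1 z2 by (simp add: dist_commute)
        finally show False using sp by simp
      qed
    qed
    have sub: "(\<Union>k\<in>I. ball (case k of (i, m) \<Rightarrow> p i m) e) \<subseteq> eps_nbhd G e"
    proof clarify
      fix z i m assume "(i, m) \<in> I" "z \<in> ball (p i m) e"
      hence "i \<in> F" "m \<le> M" unfolding I_def Gi_def by auto
      hence "p i m \<in> G" unfolding p_def using seg[of i "h * real m"] hM[of m] h0 by simp
      then show "z \<in> eps_nbhd G e" using \<open>z \<in> ball (p i m) e\<close> unfolding eps_nbhd_def by auto
    qed
    have "measure lebesgue (\<Union>k\<in>I. ball (case k of (i, m) \<Rightarrow> p i m) e)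
          = (\<Sum>k\<in>I. measure lebesgue (ball (case k of (i, m) \<Rightarrow> p i m) e))"
      apply (rule measure_finite_Union[OF fI _ disj])
      subgoal by auto
      subgoal for k by (rule ball_fin)
      done
    also have "\<dots> = (\<Sum>k\<in>I. pi * e^2)"
      by (rule sum.cong[OF refl], rule ball_meas) (use e0 in simp)
    also have "\<dots> = real (card I) * (pi * e^2)" by simp
    finally have meq: "measure lebesgue (\<Union>k\<in>I. ball (case k of (i, m) \<Rightarrow> p i m) e) = real (card I) * (pi * e^2)" .
    have "real (card I) * (pi * e^2) \<le> measure lebesgue (eps_nbhd G e)"
      unfolding meq[symmetric]
      by (rule measure_mono_fmeasurable[OF sub _ eps_nbhd_lmeas[OF bG]]) auto
    moreover have "(real (card F) / h - K) * (pi * e^2) \<le> real (card I) * (pi * e^2)"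
      by (rule mult_right_mono[OF cardI]) simp
    moreover have "(real (card F) / h - K) * (pi * e^2) = pi * e * real (card F) / 2 - pi * K * e^2"
      unfolding h_def using e0 by (simp add: field_simps power2_eq_square)
    ultimately show "pi * e * real (card F) / 2 - pi * K * e^2 \<le> measure lebesgue (eps_nbhd G e)" by linarith
  qed
qed



lemma cm_eq: "circle_map x = circle_map y \<longleftrightarrow> x - y \<in> \<int>"
proof -
  have "circle_map x = circle_map y \<longleftrightarrow> exp (\<i> * of_real (2*pi*x)) = exp (\<i> * of_real (2*pi*y))"
    unfolding circle_map_def by (simp add: cis_conv_exp)
  also have "\<dots> \<longleftrightarrow> (\<exists>n::int. x - y = of_int n)"
    unfolding exp_eq
  proof (auto simp: algebra_simps complex_eq_iff)
    fix n :: int assume "pi * (x * 2) = pi * (y * 2) + pi * (real_of_int n * 2)"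
    hence "2 * pi * (x - (y + real_of_int n)) = 0" by (simp add: algebra_simps)
    thus "\<exists>n. x = y + real_of_int n" by (intro exI[of _ n]) simp
  qed
  finally show ?thesis by (auto simp: Ints_def)
qed

lemma cm_norm [simp]: "norm (circle_map x) = 1"
  by (simp add: circle_map_def)

lemma cm_add: "circle_map (a + b) = circle_map a * circle_map b"
  by (simp add: circle_map_def cis_mult distrib_left)

lemma int_valued_const:
  fixes f :: "real \<Rightarrow> real"
  assumes "continuous_on UNIV f" "\<And>x. f x \<in> \<int>"
  shows "f x = f y"
proof -
  have "f constant_on UNIV"
  proof (rule continuous_discrete_range_constant[OF connected_UNIV assms(1)])
    fix x :: real assume "x \<in> UNIV"
    show "\<exists>e>0. \<forall>y. y \<in> UNIV \<and> f y \<noteq> f x \<longrightarrow> e \<le> norm (f y - f x)"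
    proof (intro exI[of _ 1] conjI allI impI)
      fix y assume "y \<in> UNIV \<and> f y \<noteq> f x"
      then show "1 \<le> norm (f y - f x)"
        using Ints_nonzero_abs_ge1[of "f y - f x"] assms(2)[of x] assms(2)[of y] by auto
    qed simp
  qed
  then show ?thesis unfolding constant_on_def by auto
qed

lemma lift_cont: "is_lift Phi phi \<Longrightarrow> continuous_on UNIV Phi"
  unfolding is_lift_def homeomorphism_def by auto

lemma lift_nat: "is_lift Phi phi \<Longrightarrow> Phi (x + real n) = Phi x + real n"
proof (induction n arbitrary: x)
  case (Suc n)
  have "Phi (x + real (Suc n)) = Phi ((x + real n) + 1)" by (simp add: algebra_simps)
  also have "\<dots> = Phi (x + real n) + 1" using Suc.prems unfolding is_lift_def by blast
  finally show ?case using Suc by simp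
qed simp

lemma lift_int: "is_lift Phi phi \<Longrightarrow> Phi (x + of_int k) = Phi x + of_int k"
proof (cases "k \<ge> 0")
  case True
  assume L: "is_lift Phi phi"
  then show ?thesis using lift_nat[OF L, of x "nat k"] True by simp
next
  case False
  assume L: "is_lift Phi phi"
  have "Phi (x + of_int k + real (nat (-k))) = Phi (x + of_int k) + real (nat (-k))"
    by (rule lift_nat[OF L])
  then show ?thesis using False by simp
qed

lemma iter_int: "is_lift Phi phi \<Longrightarrow> (Phi ^^ n) (x + of_int k) = (Phi ^^ n) x + of_int k"
  by (induction n) (auto simp: lift_int)

lemma iter_mono: fixes Phi :: "real \<Rightarrow> real" shows "mono Phi \<Longrightarrow> mono (Phi ^^ n)"
proof (induction n)
  case (Suc n)
  show ?case
  proof (rule monoI)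
    fix x y :: real assume "x \<le> y"
    then have h: "(Phi ^^ n) x \<le> (Phi ^^ n) y" using Suc by (auto dest: monoD)
    show "(Phi ^^ Suc n) x \<le> (Phi ^^ Suc n) y" using monoD[OF Suc.prems h] by simp
  qed
qed (simp add: mono_def)

lemma mono_lift:
  assumes "orient_pres_circle_homeo phi" "is_lift Phi phi"
  shows "mono Phi"
proof -
  obtain Psi where P: "is_lift Psi phi" "mono Psi"
    using assms(1) unfolding orient_pres_circle_homeo_def by blast
  have c: "continuous_on UNIV (\<lambda>x. Phi x - Psi x)"
      using lift_cont[OF assms(2)] lift_cont[OF P(1)] by (intro continuous_intros)
  have i: "Phi x - Psi x \<in> \<int>" for x
  proof -
    have "circle_map (Phi x) = circle_map (Psi x)"
      using assms(2) P(1) unfolding is_lift_def by metis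
    then show "Phi x - Psi x \<in> \<int>" using cm_eq by blast
  qed
  have "Phi x - Psi x = Phi 0 - Psi 0" for x
    using int_valued_const[of "\<lambda>x. Phi x - Psi x", OF c i] by blast
  hence "Phi x = Psi x + (Phi 0 - Psi 0)" for x by (metis add_diff_cancel_left' diff_add_cancel)
  then show ?thesis using P(2) unfolding mono_def by (metis add_le_cancel_right)
qed

lemma rot_rational:
  assumes L: "is_lift Phi phi" and M: "mono Phi" and k: "k > 0"
    and per: "(Phi ^^ k) y = y + of_int j"
  shows "rotation_number Phi = of_int j / real k"
proof -
  have Q: "(Phi ^^ (q * k)) y = y + of_int (int q * j)" for q
  proof (induction q)
    case (Suc q)
    have "(Phi ^^ (Suc q * k)) y = (Phi ^^ k) ((Phi ^^ (q * k)) y)"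
      by (simp add: funpow_add)
    also have "\<dots> = (Phi ^^ k) (y + of_int (int q * j))" using Suc.IH by simp
    also have "\<dots> = (Phi ^^ k) y + of_int (int q * j)" by (rule iter_int[OF L])
    finally show ?case using per by (simp add: algebra_simps)
  qed simp
  have R: "(Phi ^^ n) y = (Phi ^^ (n mod k)) y + of_int (int (n div k) * j)" for n
  proof -
    have "(Phi ^^ n) y = (Phi ^^ (n mod k)) ((Phi ^^ ((n div k) * k)) y)"
      by (metis funpow_add comp_apply mod_div_mult_eq)
    also have "\<dots> = (Phi ^^ (n mod k)) (y + of_int (int (n div k) * j))" by (simp only: Q)
    also have "\<dots> = (Phi ^^ (n mod k)) y + of_int (int (n div k) * j)" by (rule iter_int[OF L])
    finally show ?thesis .
  qed
  define B where "B = (\<Sum>r<k. \<bar>(Phi ^^ r) y - real r * j / k\<bar>)"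
  have Bb: "\<bar>(Phi ^^ r) y - real r * j / k\<bar> \<le> B" if "r < k" for r
    unfolding B_def by (rule member_le_sum) (use that in auto)
  have Y: "\<bar>(Phi ^^ n) y - real n * j / k\<bar> \<le> B" for n
  proof -
    have nn: "real n = real (n mod k) + real (n div k) * real k"
      by (metis mod_div_mult_eq of_nat_add of_nat_mult)
    have "(Phi ^^ n) y - real n * j / k = (Phi ^^ (n mod k)) y - real (n mod k) * j / k"
      unfolding R[of n] nn using k by (simp add: field_simps)
    then show ?thesis using Bb[of "n mod k"] k by simp
  qed
  have Z: "\<bar>(Phi ^^ n) 0 - (Phi ^^ n) y\<bar> \<le> \<bar>y\<bar> + 1" for n
  proof -
    define m where "m = \<lfloor>y\<rfloor>"
    have m1: "of_int m \<le> y" "y \<le> of_int m + 1" unfolding m_def by linarith+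
    have "(Phi ^^ n) (0 + of_int m) \<le> (Phi ^^ n) y"
      using iter_mono[OF M, of n] m1 unfolding mono_def by simp
    moreover have "(Phi ^^ n) y \<le> (Phi ^^ n) (0 + of_int (m + 1))"
      using iter_mono[OF M, of n] m1 unfolding mono_def by simp
    ultimately have "(Phi ^^ n) 0 + of_int m \<le> (Phi ^^ n) y" "(Phi ^^ n) y \<le> (Phi ^^ n) 0 + of_int (m + 1)"
      unfolding iter_int[OF L] by auto
    moreover have "\<bar>real_of_int m\<bar> \<le> \<bar>y\<bar> + 1" "\<bar>real_of_int m + 1\<bar> \<le> \<bar>y\<bar> + 1" using m1 by linarith+
    ultimately show ?thesis by linarith
  qed
  define D where "D = B + \<bar>y\<bar> + 1"
  have W: "\<bar>(Phi ^^ n) 0 - real n * j / k\<bar> \<le> D" for n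
    using Y[of n] Z[of n] unfolding D_def by linarith
  have "(\<lambda>n. (Phi ^^ n) 0 / real n - of_int j / real k) \<longlonglongrightarrow> 0"
  proof (rule Lim_null_comparison)
    show "(\<lambda>n. D / real n) \<longlonglongrightarrow> 0" by (rule lim_const_over_n)
    show "\<forall>\<^sub>F n in sequentially. norm ((Phi ^^ n) 0 / real n - of_int j / real k) \<le> D / real n"
      unfolding eventually_sequentially
    proof (intro exI[of _ 1] allI impI)
      fix n :: nat assume "1 \<le> n"
      hence n0: "real n > 0" by simp
      have "(Phi ^^ n) 0 / real n - of_int j / real k = ((Phi ^^ n) 0 - real n * j / k) / real n"
        using n0 by (simp add: field_simps)
      then show "norm ((Phi ^^ n) 0 / real n - of_int j / real k) \<le> D / real n"
        using W[of n] n0 by (simp add: divide_right_mono)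
    qed
  qed
  hence "(\<lambda>n. (Phi ^^ n) 0 / real n) \<longlonglongrightarrow> of_int j / real k"
    by (simp only: LIM_zero_iff)
  then show ?thesis unfolding rotation_number_def by (rule limI)
qed



lemma superficial_crit:
  fixes G :: "complex set"
  assumes "\<And>N::nat. \<exists>C. \<forall>e. 0 < e \<longrightarrow> e \<le> 1/2 \<longrightarrow>
           measure lebesgue (eps_nbhd G e) \<ge> pi * e * real N / 2 - C * e^2"
  shows "filterlim (\<lambda>e. measure lebesgue (eps_nbhd G e) / e) at_top (at_right 0)"
  unfolding filterlim_at_top
proof
  fix Z :: real
  obtain N :: nat where N: "2 * (Z + 1) / pi \<le> real N" using real_arch_simple by blast
  have N': "Z + 1 \<le> pi * real N / 2" using N pi_gt_zero by (simp add: field_simps)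
  obtain C where C: "\<And>e. 0 < e \<Longrightarrow> e \<le> 1/2 \<Longrightarrow>
           measure lebesgue (eps_nbhd G e) \<ge> pi * e * real N / 2 - C * e^2" using assms by blast
  show "\<forall>\<^sub>F e in at_right 0. Z \<le> measure lebesgue (eps_nbhd G e) / e"
    unfolding eventually_at_right_field
  proof (intro exI[of _ "min (1/2) (1 / (\<bar>C\<bar> + 1))"] conjI allI impI)
    show "(0::real) < min (1/2) (1 / (\<bar>C\<bar> + 1))" by simp
    fix e :: real assume e0: "0 < e" and eb: "e < min (1/2) (1 / (\<bar>C\<bar> + 1))"
    have "\<bar>C\<bar> * e \<le> 1"
    proof -
      have "e * (\<bar>C\<bar> + 1) < 1" using eb by (simp add: field_simps)
      moreover have "\<bar>C\<bar> * e = e * (\<bar>C\<bar> + 1) - e" by (simp add: algebra_simps)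
      ultimately show ?thesis using e0 by linarith
    qed
    hence Ce: "C * e \<le> 1" by (metis abs_ge_self e0 less_imp_le mult_right_mono order_trans)
    have m: "measure lebesgue (eps_nbhd G e) \<ge> pi * e * real N / 2 - C * e^2" using C e0 eb by simp
    have "measure lebesgue (eps_nbhd G e) / e \<ge> (pi * e * real N / 2 - C * e^2) / e"
      using m e0 by (simp add: divide_right_mono)
    also have "(pi * e * real N / 2 - C * e^2) / e = pi * real N / 2 - C * e"
      using e0 by (simp add: field_simps power2_eq_square)
    finally show "Z \<le> measure lebesgue (eps_nbhd G e) / e" using Ce N' by linarith
  qed
qed

lemma seg_in:
  assumes "0 \<le> s" "s \<le> 1"
  shows "curl_vertex u n + of_real s * circle_map (u n) \<in> curlicue u"
proof (cases "s < 1")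
  case True
  have fl: "\<lfloor>real n + s\<rfloor> = int n" using assms True by linarith
  have "curl_param u (real n + s) = curl_vertex u n + of_real s * circle_map (u n)"
    unfolding curl_param_def fl by simp
  moreover have "real n + s \<in> {0..}" using assms by simp
  ultimately show ?thesis unfolding curlicue_def by (metis image_eqI)
next
  case False
  hence s1: "s = 1" using assms by simp
  have "curl_param u (real (Suc n)) = curl_vertex u (Suc n)"
    unfolding curl_param_def by (simp only: floor_of_nat nat_int) simp
  also have "\<dots> = curl_vertex u n + circle_map (u n)" unfolding curl_vertex_def by simp
  finally have "curl_param u (real (Suc n)) = curl_vertex u n + of_real s * circle_map (u n)"
    using s1 by simp
  moreover have "real (Suc n) \<in> {0..}" by simp
  ultimately show ?thesis unfolding curlicue_def by (metis image_eqI)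
qed

lemma im_sin: "Im (circle_map a * cnj (circle_map b)) = sin (2 * pi * (a - b))"
  unfolding circle_map_def cis_cnj cis_mult by (simp add: algebra_simps)

lemma sin_ne:
  assumes "2 * (a - b) \<notin> \<int>"
  shows "sin (2 * pi * (a - b)) \<noteq> 0"
proof
  assume "sin (2 * pi * (a - b)) = 0"
  then obtain i :: int where "2 * pi * (a - b) = of_int i * pi" using sin_zero_iff_int2 by blast
  hence "pi * (2 * (a - b) - of_int i) = 0" by (simp add: algebra_simps)
  hence "2 * (a - b) = of_int i" by simp
  thus False using assms by simp
qed

lemma half_ints:
  fixes x :: real
  assumes "2 * x \<in> \<int>"
  shows "x \<in> \<int> \<or> x - 1/2 \<in> \<int>"
proof -
  obtain n :: int where n: "2 * x = of_int n" using assms Ints_cases by blast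
  show ?thesis
  proof (cases "even n")
    case True
    then obtain q where "n = 2 * q" by blast
    hence "x = of_int q" using n by simp
    then show ?thesis by simp
  next
    case False
    then obtain q where "n = 2 * q + 1" using oddE by blast
    hence "x - 1/2 = of_int q" using n by simp
    then show ?thesis by simp
  qed
qed

lemma select_dirs:
  fixes u :: "nat \<Rightarrow> real"
  assumes nd: "\<And>m m'. m \<noteq> m' \<Longrightarrow> u m - u m' \<notin> \<int>"
  shows "\<exists>F. finite F \<and> card F = N \<and> (\<forall>i\<in>F. \<forall>j\<in>F. i \<noteq> j \<longrightarrow> 2 * (u i - u j) \<notin> \<int>)"
proof -
  have fin: "finite {j. 2 * (u j - u i) \<in> \<int>}" for i
  proof -
    define D where "D = {j. u j - u i - 1/2 \<in> \<int>}"
    have "finite D"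
    proof (cases "D = {}")
      case False
      then obtain j0 where j0: "j0 \<in> D" by blast
      have "D \<subseteq> {j0}"
      proof
        fix j assume "j \<in> D"
        hence "(u j - u i - 1/2) - (u j0 - u i - 1/2) \<in> \<int>"
          using Ints_diff[of "u j - u i - 1/2" "u j0 - u i - 1/2"] j0 unfolding D_def by blast
        hence "u j - u j0 \<in> \<int>" by simp
        then show "j \<in> {j0}" using nd by blast
      qed
      then show ?thesis using finite_subset by blast
    qed simp
    moreover have "{j. 2 * (u j - u i) \<in> \<int>} \<subseteq> insert i D"
    proof
      fix j assume "j \<in> {j. 2 * (u j - u i) \<in> \<int>}"
      hence "u j - u i \<in> \<int> \<or> u j - u i - 1/2 \<in> \<int>" using half_ints by auto
      then show "j \<in> insert i D" using nd unfolding D_def by auto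
    qed
    ultimately show ?thesis using finite_subset by blast
  qed
  show ?thesis
  proof (induction N)
    case 0 show ?case by (intro exI[of _ "{}"]) simp
  next
    case (Suc N)
    then obtain F where F: "finite F" "card F = N" "\<forall>i\<in>F. \<forall>j\<in>F. i \<noteq> j \<longrightarrow> 2 * (u i - u j) \<notin> \<int>"
      by blast
    have "finite (\<Union>i\<in>F. {j. 2 * (u j - u i) \<in> \<int>})" using F(1) fin by blast
    then obtain n where n: "n \<notin> (\<Union>i\<in>F. {j. 2 * (u j - u i) \<in> \<int>})"
      using ex_new_if_finite[OF infinite_UNIV_nat] by blast
    have nF: "n \<notin> F" using n by auto
    have sym: "2 * (u i - u j) \<in> \<int> \<longleftrightarrow> 2 * (u j - u i) \<in> \<int>" for i j
    proof -
      have "2 * (u i - u j) = - (2 * (u j - u i))" by simp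
      then show ?thesis by (metis Ints_minus minus_minus)
    qed
    show ?case
    proof (intro exI[of _ "insert n F"] conjI)
      show "finite (insert n F)" using F by simp
      show "card (insert n F) = Suc N" using F nF by simp
      show "\<forall>i\<in>insert n F. \<forall>j\<in>insert n F. i \<noteq> j \<longrightarrow> 2 * (u i - u j) \<notin> \<int>"
        using F(3) n sym by auto
    qed
  qed
qed



lemma part1_bounded:
  assumes L: "is_lift Phi phi" and rot: "\<forall>z\<in>sphere 0 1. phi z = circle_map \<rho> * z"
    and irr: "\<rho> \<notin> \<rat>" and U: "\<And>n. u n = (Phi ^^ n) x0"
  shows "curlicue_bounded u"
proof -
  have ci: "Phi x - x - \<rho> \<in> \<int>" for x
  proof -
    have "circle_map (Phi x) = phi (circle_map x)" using L unfolding is_lift_def by metis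
    also have "\<dots> = circle_map \<rho> * circle_map x" using rot by simp
    also have "\<dots> = circle_map (\<rho> + x)" by (simp add: cm_add)
    finally have "Phi x - (\<rho> + x) \<in> \<int>" using cm_eq by blast
    then show ?thesis by (simp add: algebra_simps)
  qed
  define c where "c = Phi 0 - 0 - \<rho>"
  have cont: "continuous_on UNIV (\<lambda>x. Phi x - x - \<rho>)"
    using lift_cont[OF L] by (intro continuous_intros)
  have Pc: "Phi x = x + \<rho> + c" for x
    using int_valued_const[of "\<lambda>x. Phi x - x - \<rho>", OF cont ci, of x 0] unfolding c_def by simp
  have cI: "c \<in> \<int>" using ci[of 0] unfolding c_def .
  have un: "u n = x0 + real n * (\<rho> + c)" for n
    unfolding U by (induction n) (auto simp: Pc algebra_simps)
  define w where "w = circle_map \<rho>"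
  have cmu: "circle_map (u n) = circle_map x0 * w ^ n" for n
  proof -
    have "circle_map (u n) = circle_map (x0 + real n * \<rho>)"
      unfolding un cm_eq using cI by (simp add: algebra_simps)
    also have "\<dots> = circle_map x0 * circle_map (real n * \<rho>)" by (rule cm_add)
    also have "circle_map (real n * \<rho>) = w ^ n"
      by (simp only: w_def circle_map_def Complex.DeMoivre) (simp add: algebra_simps)
    finally show ?thesis .
  qed
  have w1: "w \<noteq> 1"
  proof
    assume "w = 1"
    hence "circle_map \<rho> = circle_map 0" unfolding w_def by (simp add: circle_map_def)
    hence "\<rho> \<in> \<int>" using cm_eq by force
    thus False using irr Ints_subset_Rats by blast
  qed
  have nw: "norm w = 1" unfolding w_def by simp
  have cv: "norm (curl_vertex u n) \<le> 2 / norm (w - 1)" for n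
  proof -
    have "curl_vertex u n = circle_map x0 * (\<Sum>k<n. w ^ k)"
      unfolding curl_vertex_def cmu by (simp add: sum_distrib_left)
    also have "\<dots> = circle_map x0 * ((w ^ n - 1) / (w - 1))" using geometric_sum[OF w1] by simp
    finally have "norm (curl_vertex u n) = norm (w ^ n - 1) / norm (w - 1)"
      by (simp add: norm_mult norm_divide)
    moreover have "norm (w ^ n - 1) \<le> 2"
      using norm_triangle_ineq4[of "w ^ n" 1] nw by (simp add: norm_power)
    ultimately show ?thesis by (simp add: divide_right_mono)
  qed
  show ?thesis unfolding curlicue_bounded_def bounded_iff
  proof (intro exI[of _ "2 / norm (w - 1) + 1"] ballI)
    fix z assume "z \<in> curlicue u"
    then obtain s where s: "s \<in> {0..}" "z = curl_param u s" unfolding curlicue_def by blast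
    have fr: "\<bar>s - of_int \<lfloor>s\<rfloor>\<bar> \<le> 1" by linarith
    have "norm z \<le> norm (curl_vertex u (nat \<lfloor>s\<rfloor>)) + norm (of_real (s - of_int \<lfloor>s\<rfloor>) * circle_map (u (nat \<lfloor>s\<rfloor>)))"
      unfolding s curl_param_def by (rule norm_triangle_ineq)
    also have "norm (of_real (s - of_int \<lfloor>s\<rfloor>) * circle_map (u (nat \<lfloor>s\<rfloor>))) = \<bar>s - of_int \<lfloor>s\<rfloor>\<bar>"
      by (simp only: norm_mult norm_of_real cm_norm mult_1_right)
    also have "norm (curl_vertex u (nat \<lfloor>s\<rfloor>)) + \<bar>s - of_int \<lfloor>s\<rfloor>\<bar> \<le> 2 / norm (w - 1) + 1"
      using cv[of "nat \<lfloor>s\<rfloor>"] fr by linarith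
    finally show "norm z \<le> 2 / norm (w - 1) + 1" .
  qed
qed


lemma part2:
  fixes Phi :: "real \<Rightarrow> real" and u :: "nat \<Rightarrow> real"
  assumes H: "orient_pres_circle_homeo phi" "is_lift Phi phi" "rotation_number Phi \<notin> \<rat>"
    and U: "\<And>n. u n = (Phi ^^ n) x0" and B: "curlicue_bounded u"
  shows "superficial u"
proof -
  have M: "mono Phi" by (rule mono_lift[OF H(1) H(2)])
  have lt: "u m' - u m \<notin> \<int>" if "m < m'" for m m'
  proof
    assume "u m' - u m \<in> \<int>"
    then obtain j where j: "u m' - u m = of_int j" by (auto elim: Ints_cases)
    have "u m' = (Phi ^^ ((m' - m) + m)) x0" unfolding U using that by simp
    also have "\<dots> = (Phi ^^ (m' - m)) (u m)" unfolding U funpow_add by simp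
    finally have "(Phi ^^ (m' - m)) (u m) = u m + of_int j" using j by simp
    hence "rotation_number Phi = of_int j / real (m' - m)"
      by (rule rot_rational[OF H(2) M, rotated]) (use that in simp)
    hence "rotation_number Phi \<in> \<rat>" by simp
    thus False using H(3) by simp
  qed
  have nd: "u m - u m' \<notin> \<int>" if "m \<noteq> m'" for m m'
  proof (cases "m < m'")
    case True
    have "u m - u m' = - (u m' - u m)" by simp
    then show ?thesis using lt[OF True] by (metis Ints_minus minus_minus)
  next
    case False
    then show ?thesis using lt[of m' m] that by simp
  qed
  have bG: "bounded (curlicue u)" using B unfolding curlicue_bounded_def .
  have "filterlim (\<lambda>e. measure lebesgue (eps_nbhd (curlicue u) e) / e) at_top (at_right 0)"
  proof (rule superficial_crit)
    fix N :: nat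
    from select_dirs[OF nd, where N=N] obtain F where
      FF: "finite F \<and> card F = N \<and> (\<forall>i\<in>F. \<forall>j\<in>F. i \<noteq> j \<longrightarrow> 2 * (u i - u j) \<notin> \<int>)"
      by (rule exE)
    have F: "finite F" "card F = N" "\<forall>i\<in>F. \<forall>j\<in>F. i \<noteq> j \<longrightarrow> 2 * (u i - u j) \<notin> \<int>"
      using FF by auto
    have "\<exists>C. \<forall>e. 0 < e \<longrightarrow> e \<le> 1/2 \<longrightarrow>
           measure lebesgue (eps_nbhd (curlicue u) e) \<ge> pi * e * real (card F) / 2 - C * e^2"
    proof (rule area_bound[OF bG F(1), where a = "curl_vertex u" and d = "\<lambda>i. circle_map (u i)"])
      fix i and s :: real assume "i \<in> F" "0 \<le> s" "s \<le> 1"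
      then show "curl_vertex u i + of_real s * circle_map (u i) \<in> curlicue u" using seg_in by blast
    next
      fix i show "norm (circle_map (u i)) = 1" by simp
    next
      fix i j assume "i \<in> F" "j \<in> F" "i \<noteq> j"
      hence "2 * (u i - u j) \<notin> \<int>" using F(3) by blast
      then show "Im (circle_map (u i) * cnj (circle_map (u j))) \<noteq> 0"
        unfolding im_sin by (rule sin_ne)
    qed
    then show "\<exists>C. \<forall>e. 0 < e \<longrightarrow> e \<le> 1/2 \<longrightarrow>
           measure lebesgue (eps_nbhd (curlicue u) e) \<ge> pi * e * real N / 2 - C * e^2"
      using F(2) by simp
  qed
  then show ?thesis unfolding superficial_def using B by simp
qed

theorem proposition2p8:
  fixes phi :: "complex \<Rightarrow> complex" and Phi :: "real \<Rightarrow> real"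
    and x0 :: real and \<rho> :: real and u :: "nat \<Rightarrow> real"
  assumes "orient_pres_circle_homeo phi"
    and "is_lift Phi phi"
    and "\<rho> = rotation_number Phi"
    and "\<rho> \<notin> \<rat>"
    and "\<And>n. u n = (Phi ^^ n) x0"
  shows "((\<forall>z\<in>sphere 0 1. phi z = circle_map \<rho> * z) \<longrightarrow>
            curlicue_bounded u \<and> superficial u)
       \<and> (curlicue_bounded u \<longrightarrow> superficial u)"
proof -
  have irr: "rotation_number Phi \<notin> \<rat>" using assms(3,4) by simp
  have P2: "curlicue_bounded u \<longrightarrow> superficial u"
    using part2[OF assms(1,2) irr assms(5)] by blast
  have P1: "(\<forall>z\<in>sphere 0 1. phi z = circle_map \<rho> * z) \<longrightarrow> curlicue_bounded u"
    using part1_bounded[OF assms(2) _ assms(4,5)] by blast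
  show ?thesis using P1 P2 by blast
qed

end
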